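(* Let $(A,\mathit{Con},\Delta)$ be a normal default structure (with trivial entailment) and let $\mid\!\sim_A$ be its skeptical nonmonotonic consequence relation. Then $\mid\!\sim_A$ satisfies cautious cut: for all finite sets $X,T,Y\in\mathit{Con}$ with $X\cup T\in\mathit{Con}$, if $X\mid\!\sim_A T$ and $X\cup T\mid\!\sim_A Y$, then $X\mid\!\sim_A Y$.
   Context: A normal default structure (with trivial entailment) is a triple $(A,\mathit{Con},\Delta)$ where $A$ is a set of tokens; $\mathit{Con}$ is a set of finite subsets of $A$ such that $\emptyset\in\mathit{Con}$, $X\subseteq Y\in\mathit{Con}$ implies $X\in\mathit{Con}$, and $\{a\}\in\mathit{Con}$ for every $a\in A$; an arbitrary subset of $A$ is called consistent (written $X\in\mathit{Con}$) if all its finite subsets lie in $\mathit{Con}$; and $\Delta$ is a set of normal defaults, each written $\frac{X:a}{a}$ with $X\in\mathit{Con}$ finite and $a\in A$. For a consistent set $x\subseteq A$ and any $S\subseteq A$, define $\phi(x,S,0)=x$ and $\phi(x,S,i+1)=\phi(x,S,i)\cup\{a\mid \frac{X:a}{a}\in\Delta,\ X\subseteq\phi(x,S,i),\ \{a\}\cup S\in\mathit{Con}\}$, and $\Phi(x,S)=\bigcup_{i\ge0}\phi(x,S,i)$. A set $y$ is an extension of $x$ if $\Phi(x,y)=y$. The skeptical consequence relation is defined for $X\in\mathit{Con}$ and $a\in A$ by $X\mid\!\sim_A a$ iff $a$ belongs to every extension of $X$; for a finite set $Y$, $X\mid\!\sim_A Y$ means $X\mid\!\sim_A b$ for every $b\in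 Y$. *)

theory Defs
  imports Main
begin

(* A normal default (X : a / a) is represented as the pair (X, a). *)

definition normal_default_structure ::
  "'a set \<Rightarrow> 'a set set \<Rightarrow> ('a set \<times> 'a) set \<Rightarrow> bool" where
  "normal_default_structure A Con Delta \<longleftrightarrow>
     (\<forall>X\<in>Con. finite X \<and> X \<subseteq> A) \<and>
     {} \<in> Con \<and>
     (\<forall>X Y. X \<subseteq> Y \<and> Y \<in> Con \<longrightarrow> X \<in> Con) \<and>
     (\<forall>a\<in>A. {a} \<in> Con) \<and>
     (\<forall>(X, a)\<in>Delta. finite X \<and> X \<in> Con \<and> a \<in> A)"

definition consistent :: "'a set set \<Rightarrow> 'a set \<Rightarrow> bool" where
  "consistent Con X \<longleftrightarrow> (\<forall>F. finite F \<and> F \<subseteq> X \<longrightarrow> F \<in> Con)"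

fun phi :: "'a set set \<Rightarrow> ('a set \<times> 'a) set \<Rightarrow> 'a set \<Rightarrow> 'a set \<Rightarrow> nat \<Rightarrow> 'a set" where
  "phi Con Delta x S 0 = x"
| "phi Con Delta x S (Suc i) = phi Con Delta x S i \<union>
     {a. \<exists>X. (X, a) \<in> Delta \<and> X \<subseteq> phi Con Delta x S i \<and> consistent Con (insert a S)}"

definition Phi :: "'a set set \<Rightarrow> ('a set \<times> 'a) set \<Rightarrow> 'a set \<Rightarrow> 'a set \<Rightarrow> 'a set" where
  "Phi Con Delta x S = (\<Union>i. phi Con Delta x S i)"

definition extension :: "'a set set \<Rightarrow> ('a set \<times> 'a) set \<Rightarrow> 'a set \<Rightarrow> 'a set \<Rightarrow> bool" where
  "extension Con Delta x y \<longleftrightarrow> Phi Con Delta x y = y"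

definition skeptical :: "'a set \<Rightarrow> 'a set set \<Rightarrow> ('a set \<times> 'a) set \<Rightarrow> 'a set \<Rightarrow> 'a \<Rightarrow> bool" where
  "skeptical A Con Delta X a \<longleftrightarrow> X \<in> Con \<and> a \<in> A \<and>
     (\<forall>y. extension Con Delta X y \<longrightarrow> a \<in> y)"

definition skeptical_set :: "'a set \<Rightarrow> 'a set set \<Rightarrow> ('a set \<times> 'a) set \<Rightarrow> 'a set \<Rightarrow> 'a set \<Rightarrow> bool" where
  "skeptical_set A Con Delta X Y \<longleftrightarrow> finite Y \<and> (\<forall>b\<in>Y. skeptical A Con Delta X b)"

end

theory Submission
  imports Defs
begin

lemma phi_mono_i: "i \<le> j \<Longrightarrow> phi Con Delta x S i \<subseteq> phi Con Delta x S j"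
  by (induction j) (auto simp: le_Suc_eq)

lemma phi_mono_x: "x \<subseteq> x' \<Longrightarrow> phi Con Delta x S i \<subseteq> phi Con Delta x' S i"
  by (induction i) auto

lemma finite_in_phi:
  assumes "finite Z" "Z \<subseteq> Phi Con Delta x S"
  shows "\<exists>j. Z \<subseteq> phi Con Delta x S j"
  using assms
proof (induction Z rule: finite_induct)
  case empty then show ?case by auto
next
  case (insert z F)
  then obtain j where j: "F \<subseteq> phi Con Delta x S j" by auto
  from insert.prems obtain k where k: "z \<in> phi Con Delta x S k" by (auto simp: Phi_def)
  have "F \<subseteq> phi Con Delta x S (max j k)" using j phi_mono_i[of j "max j k" Con Delta x S] by (meson order_trans max.cobounded1)
  moreover have "z \<in> phi Con Delta x S (max j k)" using k phi_mono_i[of k "max j k" Con Delta x S] by (meson subsetD max.cobounded2)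
  ultimately show ?case by blast
qed

lemma ext_union:
  assumes nds: "normal_default_structure A Con Delta"
    and ext: "extension Con Delta X y" and T: "T \<subseteq> y"
  shows "extension Con Delta (X \<union> T) y"
proof -
  have y: "Phi Con Delta X y = y" using ext by (simp add: extension_def)
  have "Phi Con Delta X y \<subseteq> Phi Con Delta (X \<union> T) y"
    unfolding Phi_def by (intro UN_mono order_refl phi_mono_x) simp
  then have sub1: "y \<subseteq> Phi Con Delta (X \<union> T) y" by (simp add: y)
  have "phi Con Delta (X \<union> T) y i \<subseteq> y" for i
  proof (induction i)
    case 0
    have "phi Con Delta X y 0 \<subseteq> Phi Con Delta X y" unfolding Phi_def by blast
    then have "X \<subseteq> y" using y by simp
    then show ?case using T by simp
  next
    case (Suc i)
    have "a \<in> y" if "(Z, a) \<in> Delta" "Z \<subseteq> phi Con Delta (X \<union> T) y i"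
        "consistent Con (insert a y)" for Z a
    proof -
      have fd: "\<forall>(X, a)\<in>Delta. finite X" using nds unfolding normal_default_structure_def by blast
      have "finite Z" using fd that(1) by fast
      moreover have "Z \<subseteq> Phi Con Delta X y" using that(2) Suc.IH by (metis y subset_trans)
      ultimately obtain j where "Z \<subseteq> phi Con Delta X y j" using finite_in_phi by blast
      then have "a \<in> phi Con Delta X y (Suc j)" using that(1,3) by auto
      moreover have "phi Con Delta X y (Suc j) \<subseteq> Phi Con Delta X y" unfolding Phi_def by blast
      ultimately show ?thesis using y by blast
    qed
    then show ?case using Suc.IH by auto
  qed
  then have "Phi Con Delta (X \<union> T) y \<subseteq> y" unfolding Phi_def by blast
  then show ?thesis using sub1 by (simp add: extension_def)
qed

theorem theorem3:
  fixes A :: "'a set" and Con :: "'a set set" and Delta :: "('a set \<times> 'a) set"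
    and X T Y :: "'a set"
  assumes "normal_default_structure A Con Delta"
    and "finite X" and "finite T" and "finite Y"
    and "X \<in> Con" and "T \<in> Con" and "Y \<in> Con" and "X \<union> T \<in> Con"
    and "skeptical_set A Con Delta X T"
    and "skeptical_set A Con Delta (X \<union> T) Y"
  shows "skeptical_set A Con Delta X Y"
  unfolding skeptical_set_def skeptical_def
proof (intro conjI ballI allI impI)
  show "finite Y" by fact
next
  fix b assume "b \<in> Y"
  then show "X \<in> Con" "b \<in> A" using assms(5,10) by (auto simp: skeptical_set_def skeptical_def)
next
  fix b y assume b: "b \<in> Y" and e: "extension Con Delta X y"
  have "T \<subseteq> y" using assms(9) e by (auto simp: skeptical_set_def skeptical_def)
  then have "extension Con Delta (X \<union> T) y" using ext_union[OF assms(1) e] by blast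
  then show "b \<in> y" using assms(10) b by (auto simp: skeptical_set_def skeptical_def)
qed

end
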